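(* Let $D=0.5$, let $p_0,p_1,p_2,\dots$ be the PWM basis functions defined in the context, and let $$g(\tau)=\begin{cases}1, & 0\le\tau<0.25,\\ 0, & 0.25\le\tau<0.75,\\ -1, & 0.75\le\tau\le1.\end{cases}$$ Then (i) $\int_0^1 p_k(\tau)\,g(\tau)\,d\tau=0$ for $k=0$ and for every odd $k\ge1$; and (ii) there is a constant $c>0$ such that for every $N_p\in\mathbb N$, the $L^2([0,1])$-orthogonal projection $g_h$ of $g$ onto $\mathrm{span}\{p_0,\dots,p_{N_p}\}$ satisfies $\|g-g_h\|_{L^2([0,1])}\ge c$. In particular, the PWM basis functions with $D=0.5$ do not span a dense subspace of $L^2([0,1])$.
   Context: The PWM basis functions with duty cycle $D\in(0,1)$ are functions of the relative time $\tau\in[0,1]$, defined recursively as follows. Set $p_0(\tau)=1$ on $[0,1]$, and $$p_1(\tau)=\begin{cases}\sqrt3\,\dfrac{2\tau-D}{D}, & 0\le\tau\le D,\\[2mm] \sqrt3\,\dfrac{1+D-2\tau}{1-D}, & D\le\tau\le 1.\end{cases}$$ For $k\ge2$, define $p_k^\star(\tau)=\int_D^\tau p_{k-1}(\tau')\,d\tau'$, then $$\overline p_k(\tau)=p_k^\star(\tau)-\sum_{l=0}^{k-1}p_l(\tau)\int_0^1 p_l(s)\,p_k^\star(s)\,ds,\qquad p_k(\tau)=\frac{\overline p_k(\tau)}{\left(\int_0^1\overline p_k(s)^2\,ds\right)^{1/2}}.$$ *)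

theory Defs
  imports "HOL-Analysis.Analysis"
begin

definition oint :: "real \<Rightarrow> real \<Rightarrow> (real \<Rightarrow> real) \<Rightarrow> real" where
  "oint a t f = (if a \<le> t then integral {a..t} f else - integral {t..a} f)"

definition ip01 :: "(real \<Rightarrow> real) \<Rightarrow> (real \<Rightarrow> real) \<Rightarrow> real" where
  "ip01 f g = integral {0..1} (\<lambda>s. f s * g s)"

definition pwm_p0 :: "real \<Rightarrow> real" where
  "pwm_p0 t = 1"

definition pwm_p1 :: "real \<Rightarrow> real \<Rightarrow> real" where
  "pwm_p1 D t = (if t \<le> D then sqrt 3 * (2 * t - D) / D
                 else sqrt 3 * (1 + D - 2 * t) / (1 - D))"

definition pwm_next :: "real \<Rightarrow> (real \<Rightarrow> real) list \<Rightarrow> (real \<Rightarrow> real)" where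
  "pwm_next D ps =
    (let pstar = (\<lambda>t. oint D t (last ps));
         pbar = (\<lambda>t. pstar t - (\<Sum>l<length ps. (ps ! l) t * ip01 (ps ! l) pstar))
     in (\<lambda>t. pbar t / sqrt (ip01 pbar pbar)))"

fun pwm_list :: "real \<Rightarrow> nat \<Rightarrow> (real \<Rightarrow> real) list" where
  "pwm_list D 0 = [pwm_p0]"
| "pwm_list D (Suc 0) = [pwm_p0, pwm_p1 D]"
| "pwm_list D (Suc (Suc n)) =
     (let ps = pwm_list D (Suc n) in ps @ [pwm_next D ps])"

definition pwm :: "real \<Rightarrow> nat \<Rightarrow> real \<Rightarrow> real" where
  "pwm D k = pwm_list D k ! k"

definition g_test :: "real \<Rightarrow> real" where
  "g_test t = (if t < 1/4 then 1 else if t < 3/4 then 0 else -1)"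

definition L2norm01 :: "(real \<Rightarrow> real) \<Rightarrow> real" where
  "L2norm01 f = sqrt (integral {0..1} (\<lambda>t. (f t)\<^sup>2))"

end

theory Submission
  imports Defs
begin

lemma int_refl:
  fixes f :: "real \<Rightarrow> real"
  shows "integral {c-b..c-a} f = integral {a..b} (\<lambda>s. f (c - s))"
proof -
  have "integral {a..b} (\<lambda>s. f (c - s)) = integral {-b..-a} (\<lambda>x. f (c - - x))"
    using Henstock_Kurzweil_Integration.integral_reflect_real[of b a "\<lambda>s. f (c - s)"] by simp
  also have "\<dots> = integral {(c-b)-c..(c-a)-c} (\<lambda>x. f (x + c))"
    by (simp add: add.commute)
  also have "\<dots> = integral {c-b..c-a} f" by (rule integral_shift_real_ivl)
  finally show ?thesis by simp
qed

lemma int_refl_sym: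
  fixes f :: "real \<Rightarrow> real"
  assumes "f integrable_on {a..b}" "a \<le> b" "\<And>s. s \<in> {a..b} \<Longrightarrow> f (c - s) = \<sigma> * f s + \<kappa>"
  shows "integral {c-b..c-a} f = \<sigma> * integral {a..b} f + \<kappa> * (b - a)"
proof -
  have "integral {c-b..c-a} f = integral {a..b} (\<lambda>s. \<sigma> * f s + \<kappa>)"
    unfolding int_refl using assms(3) by (intro integral_cong) auto
  also have "\<dots> = \<sigma> * integral {a..b} f + integral {a..b} (\<lambda>s. \<kappa>)"
    by (subst integral_add) (use assms(1) integrable_cmul[of f "{a..b}" \<sigma>] in auto)
  also have "\<dots> = \<sigma> * integral {a..b} f + \<kappa> * (b - a)"
    using assms(2) by simp
  finally show ?thesis .
qed

lemma odd_zero: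
  fixes f :: "real \<Rightarrow> real"
  assumes "\<And>s. s \<in> {0..1} \<Longrightarrow> f (1 - s) = - f s"
  shows "integral {0..1} f = 0"
proof -
  have "integral {1-1..1-0} f = integral {0..1} (\<lambda>s. - f s)"
    unfolding int_refl using assms by (intro integral_cong) auto
  then show ?thesis by (simp add: integral_neg)
qed

lemma cont_int:
  fixes f :: "real \<Rightarrow> real"
  assumes "continuous_on {0..1} f" "0 \<le> a" "b \<le> 1"
  shows "f integrable_on {a..b}"
  by (rule integrable_continuous_real) (use assms in \<open>auto intro: continuous_on_subset\<close>)

lemma oint_eq:
  fixes f :: "real \<Rightarrow> real"
  assumes "continuous_on {0..1} f" "t \<in> {0..1}"
  shows "oint (1/2) t f = integral {0..t} f - integral {0..1/2} f"
proof (cases "1/2 \<le> t")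
  case True
  have "integral {0..1/2} f + integral {1/2..t} f = integral {0..t} f"
    by (rule Henstock_Kurzweil_Integration.integral_combine) (use True assms in \<open>auto intro: cont_int\<close>)
  then show ?thesis using True by (simp add: oint_def)
next
  case False
  have "integral {0..t} f + integral {t..1/2} f = integral {0..1/2} f"
    by (rule Henstock_Kurzweil_Integration.integral_combine) (use False assms in \<open>auto intro: cont_int\<close>)
  then show ?thesis using False by (simp add: oint_def)
qed

lemma h_refl:
  fixes f :: "real \<Rightarrow> real"
  assumes "continuous_on {0..1} f" "\<And>s. s \<in> {0..t} \<Longrightarrow> f (c - s) = \<sigma> * f s + \<kappa>"
    "0 \<le> t" "t \<le> c" "c \<le> 1"
  shows "integral {0..c-t} f = integral {0..c} f - \<sigma> * integral {0..t} f - \<kappa> * t"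
proof -
  have a: "integral {c-t..c-0} f = \<sigma> * integral {0..t} f + \<kappa> * (t - 0)"
    by (rule int_refl_sym) (use assms in \<open>auto intro: cont_int\<close>)
  have "integral {0..c-t} f + integral {c-t..c} f = integral {0..c} f"
    by (rule Henstock_Kurzweil_Integration.integral_combine) (use assms in \<open>auto intro: cont_int\<close>)
  then show ?thesis using a by simp
qed

definition Ecl :: "(real \<Rightarrow> real) \<Rightarrow> bool" where
  "Ecl f \<longleftrightarrow> continuous_on {0..1} f \<and> (\<forall>t\<in>{0..1}. f (1 - t) = f t)
     \<and> (\<exists>K. \<forall>t\<in>{0..1/2}. f (1/2 - t) = - f t + 2 * K)"

definition Ocl :: "(real \<Rightarrow> real) \<Rightarrow> bool" where
  "Ocl f \<longleftrightarrow> continuous_on {0..1} f \<and> (\<forall>t\<in>{0..1}. f (1 - t) = - f t)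
     \<and> (\<forall>t\<in>{0..1/2}. f (1/2 - t) = f t)"

lemma Ecl_zero: "Ecl (\<lambda>t. 0)"
  unfolding Ecl_def by auto

lemma Ocl_zero: "Ocl (\<lambda>t. 0)"
  unfolding Ocl_def by auto

lemma Ecl_add: "Ecl f \<Longrightarrow> Ecl g \<Longrightarrow> Ecl (\<lambda>t. f t + g t)"
  unfolding Ecl_def
proof (elim conjE exE, intro conjI)
  fix K L assume "\<forall>t\<in>{0..1/2}. f (1/2 - t) = - f t + 2 * K" "\<forall>t\<in>{0..1/2}. g (1/2 - t) = - g t + 2 * L"
  then show "\<exists>K. \<forall>t\<in>{0..1/2}. f (1/2 - t) + g (1/2 - t) = - (f t + g t) + 2 * K"
    by (intro exI[of _ "K + L"]) auto
qed (auto intro: continuous_intros)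

lemma Ocl_add: "Ocl f \<Longrightarrow> Ocl g \<Longrightarrow> Ocl (\<lambda>t. f t + g t)"
  unfolding Ocl_def by (auto intro: continuous_intros)

lemma Ecl_scale: "Ecl f \<Longrightarrow> Ecl (\<lambda>t. f t * c)"
  unfolding Ecl_def
proof (elim conjE exE, intro conjI)
  fix K assume "\<forall>t\<in>{0..1/2}. f (1/2 - t) = - f t + 2 * K"
  then show "\<exists>K. \<forall>t\<in>{0..1/2}. f (1/2 - t) * c = - (f t * c) + 2 * K"
  proof (intro exI[of _ "K * c"] ballI)
    fix t :: real assume "\<forall>t\<in>{0..1/2}. f (1/2 - t) = - f t + 2 * K" "t \<in> {0..1/2}"
    then have "f (1/2 - t) * c = (- f t + 2 * K) * c" by simp
    then show "f (1/2 - t) * c = - (f t * c) + 2 * (K * c)" by (simp add: algebra_simps)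
  qed
qed (auto intro: continuous_intros)

lemma Ocl_scale: "Ocl f \<Longrightarrow> Ocl (\<lambda>t. f t * c)"
  unfolding Ocl_def by (auto intro: continuous_intros)

lemma Ecl_div: "Ecl f \<Longrightarrow> Ecl (\<lambda>t. f t / c)"
  using Ecl_scale[of f "1/c"] by simp

lemma Ocl_div: "Ocl f \<Longrightarrow> Ocl (\<lambda>t. f t / c)"
  using Ocl_scale[of f "1/c"] by simp

lemma Ecl_diff: "Ecl f \<Longrightarrow> Ecl g \<Longrightarrow> Ecl (\<lambda>t. f t - g t)"
  using Ecl_add[of f "\<lambda>t. g t * (-1)"] Ecl_scale[of g "-1"] by simp

lemma Ocl_diff: "Ocl f \<Longrightarrow> Ocl g \<Longrightarrow> Ocl (\<lambda>t. f t - g t)"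
  using Ocl_add[of f "\<lambda>t. g t * (-1)"] Ocl_scale[of g "-1"] by simp

lemma Ecl_sum: "finite A \<Longrightarrow> (\<And>l. l \<in> A \<Longrightarrow> Ecl (g l)) \<Longrightarrow> Ecl (\<lambda>t. \<Sum>l\<in>A. g l t)"
  by (induction A rule: finite_induct) (auto intro: Ecl_add Ecl_zero)

lemma Ocl_sum: "finite A \<Longrightarrow> (\<And>l. l \<in> A \<Longrightarrow> Ocl (g l)) \<Longrightarrow> Ocl (\<lambda>t. \<Sum>l\<in>A. g l t)"
  by (induction A rule: finite_induct) (auto intro: Ocl_add Ocl_zero)

lemma EO_ip:
  assumes "Ecl a" "Ocl b"
  shows "ip01 a b = 0" "ip01 b a = 0"
  unfolding ip01_def using assms
  by (auto simp: Ecl_def Ocl_def intro!: odd_zero)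

lemma E_int:
  assumes "Ecl f" "\<forall>t\<in>{0..1/2}. f (1/2 - t) = - f t + 2 * K"
  shows "integral {0..1} f = K"
proof -
  have c: "continuous_on {0..1} f" and s: "\<forall>t\<in>{0..1}. f (1 - t) = f t"
    using assms(1) by (auto simp: Ecl_def)
  have a: "integral {1-1/2..1-0} f = 1 * integral {0..1/2} f + 0 * (1/2 - 0)"
    by (rule int_refl_sym) (use c s in \<open>auto intro: cont_int\<close>)
  have b: "integral {1/2-1/2..1/2-0} f = (-1) * integral {0..1/2} f + (2*K) * (1/2 - 0)"
    by (rule int_refl_sym) (use c assms(2) in \<open>auto intro: cont_int\<close>)
  have "integral {0..1/2} f + integral {1/2..1} f = integral {0..1} f"
    by (rule Henstock_Kurzweil_Integration.integral_combine) (use c in \<open>auto intro: cont_int\<close>)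
  then show ?thesis using a b by simp
qed

lemma oint_cont:
  fixes f :: "real \<Rightarrow> real"
  assumes "continuous_on {0..1} f"
  shows "continuous_on {0..1} (\<lambda>t. oint (1/2) t f)"
proof -
  have "continuous_on {0..1} (\<lambda>t. integral {0..t} f - integral {0..1/2} f)"
    by (intro continuous_intros indefinite_integral_continuous_1 cont_int assms) auto
  then show ?thesis
    by (rule continuous_on_eq) (use oint_eq[OF assms] in auto)
qed

lemma E_to_O:
  assumes "Ecl f" "integral {0..1} f = 0"
  shows "Ocl (\<lambda>t. oint (1/2) t f)"
proof -
  have c: "continuous_on {0..1} f" and s: "\<forall>t\<in>{0..1}. f (1 - t) = f t"
    using assms(1) by (auto simp: Ecl_def)
  obtain K where q: "\<forall>t\<in>{0..1/2}. f (1/2 - t) = - f t + 2 * K"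
    using assms(1) by (auto simp: Ecl_def)
  have K0: "K = 0" using E_int[OF assms(1) q] assms(2) by simp
  define h where "h x = integral {0..x} f" for x
  have h1: "h (1 - t) = h 1 - 1 * h t - 0 * t" if "t \<in> {0..1}" for t
    unfolding h_def by (rule h_refl) (use c s that in auto)
  have h2: "h (1/2 - t) = h (1/2) - (-1) * h t - (2*K) * t" if "t \<in> {0..1/2}" for t
    unfolding h_def by (rule h_refl) (use c q that in auto)
  have hh: "h (1/2) = 0" using h2[of "1/2"] K0 by (simp add: h_def)
  have hhh: "h 1 = 0" using h1[of "1/2"] hh by simp
  have oe: "oint (1/2) t f = h t - h (1/2)" if "t \<in> {0..1}" for t
    using oint_eq[OF c that] by (simp add: h_def)
  show ?thesis unfolding Ocl_def
  proof (intro conjI ballI)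
    show "continuous_on {0..1} (\<lambda>t. oint (1/2) t f)" by (rule oint_cont[OF c])
  next
    fix t :: real assume t: "t \<in> {0..1}"
    then show "oint (1/2) (1 - t) f = - oint (1/2) t f"
      using oe[of t] oe[of "1-t"] h1[OF t] hh hhh by simp
  next
    fix t :: real assume t: "t \<in> {0..1/2}"
    then show "oint (1/2) (1/2 - t) f = oint (1/2) t f"
      using oe[of t] oe[of "1/2-t"] h2[OF t] hh K0 by simp
  qed
qed

lemma O_to_E:
  assumes "Ocl f"
  shows "Ecl (\<lambda>t. oint (1/2) t f)"
proof -
  have c: "continuous_on {0..1} f" and s: "\<forall>t\<in>{0..1}. f (1 - t) = - f t"
    and q: "\<forall>t\<in>{0..1/2}. f (1/2 - t) = f t"
    using assms(1) by (auto simp: Ocl_def)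
  define h where "h x = integral {0..x} f" for x
  have h1: "h (1 - t) = h 1 - (-1) * h t - 0 * t" if "t \<in> {0..1}" for t
    unfolding h_def by (rule h_refl) (use c s that in auto)
  have h2: "h (1/2 - t) = h (1/2) - 1 * h t - 0 * t" if "t \<in> {0..1/2}" for t
    unfolding h_def by (rule h_refl) (use c q that in auto)
  have hhh: "h 1 = 0" using h1[of "1/2"] by simp
  have oe: "oint (1/2) t f = h t - h (1/2)" if "t \<in> {0..1}" for t
    using oint_eq[OF c that] by (simp add: h_def)
  show ?thesis unfolding Ecl_def
  proof (intro conjI ballI)
    show "continuous_on {0..1} (\<lambda>t. oint (1/2) t f)" by (rule oint_cont[OF c])
  next
    fix t :: real assume t: "t \<in> {0..1}"
    then show "oint (1/2) (1 - t) f = oint (1/2) t f"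
      using oe[of t] oe[of "1-t"] h1[OF t] hhh by simp
  next
    show "\<exists>K. \<forall>t\<in>{0..1/2}. oint (1/2) (1/2 - t) f = - oint (1/2) t f + 2 * K"
    proof (intro exI ballI)
      fix t :: real assume t: "t \<in> {0..1/2}"
      then show "oint (1/2) (1/2 - t) f = - oint (1/2) t f + 2 * (- h (1/2) / 2)"
        using oe[of t] oe[of "1/2-t"] h2[OF t] by simp
    qed
  qed
qed

lemma pwm_list_snoc: "\<exists>x. pwm_list D (Suc n) = pwm_list D n @ [x]"
  by (cases n) (auto simp: Let_def)

lemma pwm_list_len: "length (pwm_list D n) = Suc n"
  by (induction D n rule: pwm_list.induct) (auto simp: Let_def)

lemma pwm_list_nth: "k \<le> n \<Longrightarrow> pwm_list D n ! k = pwm D k"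
proof (induction n arbitrary: k)
  case 0 then show ?case by (simp add: pwm_def)
next
  case (Suc n)
  show ?case
  proof (cases "k = Suc n")
    case True then show ?thesis by (simp add: pwm_def)
  next
    case False
    then have "k \<le> n" using Suc.prems by simp
    obtain x where "pwm_list D (Suc n) = pwm_list D n @ [x]" using pwm_list_snoc by blast
    then show ?thesis using Suc.IH[OF \<open>k \<le> n\<close>] \<open>k \<le> n\<close> by (simp add: nth_append pwm_list_len)
  qed
qed

lemma pwm_SS:
  "pwm D (Suc (Suc n)) =
    (let pstar = (\<lambda>t. oint D t (pwm D (Suc n)));
         pbar = (\<lambda>t. pstar t - (\<Sum>l<Suc (Suc n). pwm D l t * ip01 (pwm D l) pstar))
     in (\<lambda>t. pbar t / sqrt (ip01 pbar pbar)))"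
proof -
  have ne: "pwm_list D (Suc n) \<noteq> []"
    using pwm_list_len[of D "Suc n"] by auto
  have L: "last (pwm_list D (Suc n)) = pwm D (Suc n)"
    using ne by (simp add: last_conv_nth pwm_list_len pwm_def)
  have N: "\<And>l. l \<in> {..<Suc (Suc n)} \<Longrightarrow> pwm_list D (Suc n) ! l = pwm D l"
    by (simp add: pwm_list_nth)
  have N2: "\<And>t pstar. (\<Sum>l<Suc (Suc n). (pwm_list D (Suc n) ! l) t * ip01 (pwm_list D (Suc n) ! l) pstar)
      = (\<Sum>l<Suc (Suc n). pwm D l t * ip01 (pwm D l) pstar)"
    by (rule sum.cong) (auto simp: N)
  have "pwm D (Suc (Suc n)) = pwm_next D (pwm_list D (Suc n))"
    by (simp add: pwm_def Let_def nth_append pwm_list_len)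
  also have "\<dots> = (let pstar = (\<lambda>t. oint D t (pwm D (Suc n)));
         pbar = (\<lambda>t. pstar t - (\<Sum>l<Suc (Suc n). pwm D l t * ip01 (pwm D l) pstar))
     in (\<lambda>t. pbar t / sqrt (ip01 pbar pbar)))"
    unfolding pwm_next_def Let_def L pwm_list_len
    by (simp only: N2)
  finally show ?thesis .
qed

lemma int_mult_const: "integral S (\<lambda>x. f x * c) = integral S f * (c::real)"
  using integral_cmul[of S c f] by (simp add: mult.commute)

lemma int_div_const: "integral S (\<lambda>x. f x / c) = integral S f / (c::real)"
  using int_mult_const[of S f "1/c"] by simp

lemma p1_eq: "pwm_p1 (1/2) t = sqrt 3 * (1 - 4 * \<bar>t - 1/2\<bar>)"
  by (auto simp: pwm_p1_def field_simps abs_if)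

lemma ip0: "ip01 pwm_p0 f = integral {0..1} f"
  by (simp add: ip01_def pwm_p0_def)

lemma pwm0: "pwm D 0 = pwm_p0" by (simp add: pwm_def)
lemma pwm1: "pwm D (Suc 0) = pwm_p1 D" by (simp add: pwm_def)

lemma Ecl_p0: "Ecl pwm_p0"
  unfolding Ecl_def pwm_p0_def by (auto intro!: exI[of _ 1])

lemma Ecl_p1: "Ecl (pwm_p1 (1/2))"
  unfolding Ecl_def p1_eq
proof (intro conjI ballI exI[of _ 0])
  show "continuous_on {0..1} (\<lambda>t. sqrt 3 * (1 - 4 * \<bar>t - 1/2\<bar>))"
    by (intro continuous_intros)
next
  fix t :: real assume "t \<in> {0..1}"
  show "sqrt 3 * (1 - 4 * \<bar>1 - t - 1/2\<bar>) = sqrt 3 * (1 - 4 * \<bar>t - 1/2\<bar>)"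
    by (simp add: abs_minus_commute)
next
  fix t :: real assume "t \<in> {0..1/2}"
  then show "sqrt 3 * (1 - 4 * \<bar>1/2 - t - 1/2\<bar>) = - (sqrt 3 * (1 - 4 * \<bar>t - 1/2\<bar>)) + 2 * 0"
    by (simp add: abs_if algebra_simps)
qed

lemma inv:
  "continuous_on {0..1} (pwm (1/2) k) \<and> ((k = 0 \<or> odd k) \<longrightarrow> Ecl (pwm (1/2) k))
   \<and> ((even k \<and> k \<noteq> 0) \<longrightarrow> Ocl (pwm (1/2) k))
   \<and> (integral {0..1} (pwm (1/2) k) = (if k = 0 then 1 else 0))"
proof (induction k rule: less_induct)
  case (less k)
  show ?case
  proof (cases k)
    case 0
    then show ?thesis using Ecl_p0 by (auto simp: pwm0 Ecl_def pwm_p0_def)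
  next
    case (Suc m)
    show ?thesis
    proof (cases m)
      case 0
      have q: "\<forall>t\<in>{0..1/2}. pwm_p1 (1/2) (1/2 - t) = - pwm_p1 (1/2) t + 2 * 0"
        by (auto simp: p1_eq abs_if algebra_simps)
      have "integral {0..1} (pwm_p1 (1/2)) = 0"
        by (rule E_int[OF Ecl_p1 q])
      moreover have "pwm (1/2) k = pwm_p1 (1/2)" using \<open>k = Suc m\<close> 0 by (simp add: pwm1)
      moreover have "continuous_on {0..1} (pwm_p1 (1/2))" using Ecl_p1 by (simp add: Ecl_def)
      ultimately show ?thesis using Ecl_p1 \<open>k = Suc m\<close> 0 by simp
    next
      case (Suc n)
      have k: "k = Suc (Suc n)" using \<open>k = Suc m\<close> Suc by simp
      define P where "P = pwm (1/2)"
      define F where "F = (\<lambda>t. oint (1/2) t (P (Suc n)))"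
      define c where "c l = ip01 (P l) F" for l
      define pbar where "pbar = (\<lambda>t. F t - (\<Sum>l<Suc (Suc n). P l t * c l))"
      have PK: "P k = (\<lambda>t. pbar t / sqrt (ip01 pbar pbar))"
        unfolding k P_def pwm_SS[of "1/2" n] Let_def pbar_def F_def c_def P_def ..
      have Pc: "\<And>l. l < k \<Longrightarrow> continuous_on {0..1} (P l)"
        using less.IH unfolding P_def by blast
      have PE: "\<And>l. l < k \<Longrightarrow> l = 0 \<or> odd l \<Longrightarrow> Ecl (P l)"
        using less.IH unfolding P_def by blast
      have PO: "\<And>l. l < k \<Longrightarrow> even l \<Longrightarrow> l \<noteq> 0 \<Longrightarrow> Ocl (P l)"
        using less.IH unfolding P_def by blast
      have PI: "\<And>l. l < k \<Longrightarrow> integral {0..1} (P l) = (if l = 0 then 1 else 0)"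
        using less.IH unfolding P_def by blast
      have lk: "\<And>l. l < Suc (Suc n) \<Longrightarrow> l < k" using k by simp
      have nk: "Suc n < k" using k by simp
      have cls: "Ecl (P k) \<and> (odd k) \<or> Ocl (P k) \<and> even k"
      proof (cases "odd k")
        case True
        then have "even (Suc n)" using k by simp
        then have "Ocl (P (Suc n))" using PO[OF nk] by simp
        then have EF: "Ecl F" unfolding F_def by (rule O_to_E)
        have "Ecl (\<lambda>t. P l t * c l)" if "l < Suc (Suc n)" for l
        proof (cases "l = 0 \<or> odd l")
          case True
          then show ?thesis using PE[OF lk[OF that]] by (intro Ecl_scale) 
        next
          case False
          then have "Ocl (P l)" using PO[OF lk[OF that]] by simp
          then have "c l = 0" unfolding c_def using EO_ip(2)[OF EF] by blast
          then show ?thesis using Ecl_zero by simp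
        qed
        then have "Ecl pbar" unfolding pbar_def by (intro Ecl_diff EF Ecl_sum) auto
        then show ?thesis using True PK by (simp add: Ecl_div)
      next
        case False
        then have "odd (Suc n)" using k by simp
        then have E1: "Ecl (P (Suc n))" and I1: "integral {0..1} (P (Suc n)) = 0"
          using PE[OF nk] PI[OF nk] by auto
        then have OF: "Ocl F" unfolding F_def by (rule E_to_O)
        have "Ocl (\<lambda>t. P l t * c l)" if "l < Suc (Suc n)" for l
        proof (cases "l = 0 \<or> odd l")
          case False
          then show ?thesis using PO[OF lk[OF that]] by (intro Ocl_scale) simp
        next
          case True
          then have "Ecl (P l)" using PE[OF lk[OF that]] by simp
          then have "c l = 0" unfolding c_def using EO_ip(1)[OF _ OF] by blast
          then show ?thesis using Ocl_zero by simp
        qed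
        then have "Ocl pbar" unfolding pbar_def by (intro Ocl_diff OF Ocl_sum) auto
        then show ?thesis using False PK by (simp add: Ocl_div)
      qed
      have contF: "continuous_on {0..1} F"
        unfolding F_def by (rule oint_cont) (rule Pc[OF nk])
      have intP: "\<And>l. l < Suc (Suc n) \<Longrightarrow> (\<lambda>t. P l t * c l) integrable_on {0..1}"
        by (rule integrable_continuous_real, intro continuous_intros Pc lk)
      have "integral {0..1} pbar = integral {0..1} F - (\<Sum>l<Suc (Suc n). integral {0..1} (P l) * c l)"
      proof -
        have iS: "(\<lambda>t. \<Sum>l<Suc (Suc n). P l t * c l) integrable_on {0..1}"
          by (rule integrable_sum) (auto intro: intP)
        have sS: "integral {0..1} (\<lambda>t. \<Sum>l<Suc (Suc n). P l t * c l)
            = (\<Sum>l<Suc (Suc n). integral {0..1} (\<lambda>t. P l t * c l))"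
          by (rule integral_sum) (auto intro: intP)
        have iF: "F integrable_on {0..1}" by (rule integrable_continuous_real[OF contF])
        show ?thesis unfolding pbar_def integral_diff[OF iF iS] sS int_mult_const ..
      qed
      also have "\<dots> = integral {0..1} F - (\<Sum>l<Suc (Suc n). (if l = 0 then c l else 0))"
        by (intro arg_cong2[where f="(-)"] refl sum.cong) (simp add: PI lk)
      also have "\<dots> = 0"
        by (simp add: c_def P_def pwm0 ip0)
      finally have "integral {0..1} (P k) = 0"
        unfolding PK by (simp add: int_div_const)
      then show ?thesis using cls k unfolding P_def by (auto simp: Ecl_def Ocl_def)
    qed
  qed
qed


definition wq :: "real \<Rightarrow> real" where
  "wq t = (if t < 1/4 then 1 else if t < 1/2 then -1 else if t < 3/4 then 1 else -1)"

lemma pw_has_integral: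
  fixes \<phi> \<psi>1 \<psi>2 \<psi>3 \<psi>4 :: "real \<Rightarrow> real"
  assumes c1: "continuous_on {0..1} \<psi>1" and c2: "continuous_on {0..1} \<psi>2"
    and c3: "continuous_on {0..1} \<psi>3" and c4: "continuous_on {0..1} \<psi>4"
    and e1: "\<And>t. 0 \<le> t \<Longrightarrow> t < 1/4 \<Longrightarrow> \<phi> t = \<psi>1 t"
    and e2: "\<And>t. 1/4 \<le> t \<Longrightarrow> t < 1/2 \<Longrightarrow> \<phi> t = \<psi>2 t"
    and e3: "\<And>t. 1/2 \<le> t \<Longrightarrow> t < 3/4 \<Longrightarrow> \<phi> t = \<psi>3 t"
    and e4: "\<And>t. 3/4 \<le> t \<Longrightarrow> t \<le> 1 \<Longrightarrow> \<phi> t = \<psi>4 t"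
  shows "(\<phi> has_integral (integral {0..1/4} \<psi>1 + integral {1/4..1/2} \<psi>2
            + integral {1/2..3/4} \<psi>3 + integral {3/4..1} \<psi>4)) {0..1}"
proof -
  have i: "(\<psi> has_integral integral {a..b} \<psi>) {a..b}"
    if "continuous_on {0..1} \<psi>" "0 \<le> a" "b \<le> 1" for \<psi> :: "real \<Rightarrow> real" and a b
    using cont_int[OF that] by (simp add: has_integral_integral)
  have h1: "(\<phi> has_integral integral {0..1/4} \<psi>1) {0..1/4}"
    by (rule has_integral_spike_finite[of "{1/4}" _ _ \<psi>1]) (use e1 i[OF c1] in auto)
  have h2: "(\<phi> has_integral integral {1/4..1/2} \<psi>2) {1/4..1/2}"
    by (rule has_integral_spike_finite[of "{1/2}" _ _ \<psi>2]) (use e2 i[OF c2] in auto)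
  have h3: "(\<phi> has_integral integral {1/2..3/4} \<psi>3) {1/2..3/4}"
    by (rule has_integral_spike_finite[of "{3/4}" _ _ \<psi>3]) (use e3 i[OF c3] in auto)
  have h4: "(\<phi> has_integral integral {3/4..1} \<psi>4) {3/4..1}"
    by (rule has_integral_spike_finite[of "{}" _ _ \<psi>4]) (use e4 i[OF c4] in auto)
  have h12: "(\<phi> has_integral (integral {0..1/4} \<psi>1 + integral {1/4..1/2} \<psi>2)) {0..1/2}"
    by (rule has_integral_combine[OF _ _ h1 h2]) auto
  have h123: "(\<phi> has_integral (integral {0..1/4} \<psi>1 + integral {1/4..1/2} \<psi>2
            + integral {1/2..3/4} \<psi>3)) {0..3/4}"
    by (rule has_integral_combine[OF _ _ h12 h3]) auto
  show ?thesis
    by (rule has_integral_combine[OF _ _ h123 h4]) auto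
qed

lemma quarters_E:
  assumes "Ecl p"
  shows "integral {3/4..1} p = integral {0..1/4} p" "integral {1/2..3/4} p = integral {1/4..1/2} p"
proof -
  have c: "continuous_on {0..1} p" and s: "\<forall>t\<in>{0..1}. p (1 - t) = p t"
    using assms by (auto simp: Ecl_def)
  have "integral {1-1/4..1-0} p = 1 * integral {0..1/4} p + 0 * (1/4 - 0)"
    by (rule int_refl_sym) (use c s in \<open>auto intro: cont_int\<close>)
  then show "integral {3/4..1} p = integral {0..1/4} p" by simp
  have "integral {1-1/2..1-1/4} p = 1 * integral {1/4..1/2} p + 0 * (1/2 - 1/4)"
    by (rule int_refl_sym) (use c s in \<open>auto intro: cont_int\<close>)
  then show "integral {1/2..3/4} p = integral {1/4..1/2} p" by simp
qed

lemma quarters_O: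
  assumes "Ocl p"
  shows "integral {3/4..1} p = - integral {0..1/4} p" "integral {1/2..3/4} p = - integral {1/4..1/2} p"
    "integral {1/4..1/2} p = integral {0..1/4} p"
proof -
  have c: "continuous_on {0..1} p" and s: "\<forall>t\<in>{0..1}. p (1 - t) = - p t"
    and q: "\<forall>t\<in>{0..1/2}. p (1/2 - t) = p t"
    using assms by (auto simp: Ocl_def)
  have "integral {1-1/4..1-0} p = (-1) * integral {0..1/4} p + 0 * (1/4 - 0)"
    by (rule int_refl_sym) (use c s in \<open>auto intro: cont_int\<close>)
  then show "integral {3/4..1} p = - integral {0..1/4} p" by simp
  have "integral {1-1/2..1-1/4} p = (-1) * integral {1/4..1/2} p + 0 * (1/2 - 1/4)"
    by (rule int_refl_sym) (use c s in \<open>auto intro: cont_int\<close>)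
  then show "integral {1/2..3/4} p = - integral {1/4..1/2} p" by simp
  have "integral {1/2-1/4..1/2-0} p = 1 * integral {0..1/4} p + 0 * (1/4 - 0)"
    by (rule int_refl_sym) (use c q in \<open>auto intro: cont_int\<close>)
  then show "integral {1/4..1/2} p = integral {0..1/4} p" by simp
qed

lemma pwm_cont: "continuous_on {0..1} (pwm (1/2) k)"
  using inv[of k] by blast

lemma pwm_cls: "(k = 0 \<or> odd k) \<Longrightarrow> Ecl (pwm (1/2) k)" "even k \<Longrightarrow> k \<noteq> 0 \<Longrightarrow> Ocl (pwm (1/2) k)"
  using inv[of k] by blast+

lemma int_pg:
  assumes "k = 0 \<or> odd k"
  shows "integral {0..1} (\<lambda>t. pwm (1/2) k t * g_test t) = 0"
proof -
  let ?p = "pwm (1/2) k"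
  have "((\<lambda>t. ?p t * g_test t) has_integral (integral {0..1/4} ?p + integral {1/4..1/2} (\<lambda>t::real. 0::real)
            + integral {1/2..3/4} (\<lambda>t::real. 0::real) + integral {3/4..1} (\<lambda>t. - ?p t))) {0..1}"
    by (rule pw_has_integral) (auto simp: g_test_def intro: pwm_cont continuous_intros)
  moreover have "integral {3/4..1} ?p = integral {0..1/4} ?p"
    using quarters_E[OF pwm_cls(1)[OF assms]] by simp
  ultimately show ?thesis by (simp add: integral_unique)
qed

lemma int_pw: "((\<lambda>t. pwm (1/2) k t * wq t) has_integral 0) {0..1}"
proof -
  let ?p = "pwm (1/2) k"
  have h: "((\<lambda>t. ?p t * wq t) has_integral (integral {0..1/4} ?p + integral {1/4..1/2} (\<lambda>t. - ?p t)
            + integral {1/2..3/4} ?p + integral {3/4..1} (\<lambda>t. - ?p t))) {0..1}"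
    by (rule pw_has_integral) (auto simp: wq_def intro: pwm_cont continuous_intros)
  show ?thesis
  proof (cases "k = 0 \<or> odd k")
    case True
    then show ?thesis using h quarters_E[OF pwm_cls(1)[OF True]] by simp
  next
    case False
    then have "even k" "k \<noteq> 0" by auto
    then show ?thesis using h quarters_O[OF pwm_cls(2)] by simp
  qed
qed

lemma span_pw: "((\<lambda>t. (\<Sum>l\<le>N. a l * pwm (1/2) l t) * wq t) has_integral 0) {0..1}"
proof -
  have "((\<lambda>t. \<Sum>l\<le>N. a l * (pwm (1/2) l t * wq t)) has_integral (\<Sum>l\<le>N. a l * 0)) {0..1}"
    by (intro has_integral_sum has_integral_mult_right int_pw) auto
  then show ?thesis by (simp add: sum_distrib_right mult.assoc)
qed

lemma span_cont: "continuous_on {0..1} (\<lambda>t. \<Sum>l\<le>N. a l * pwm (1/2) l t)"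
  by (intro continuous_intros pwm_cont)

lemma CS:
  fixes u w :: "real \<Rightarrow> real"
  assumes "(\<lambda>t. (u t)\<^sup>2) integrable_on {0..1}" "((\<lambda>t. u t * w t) has_integral A) {0..1}"
    "\<And>t. (w t)\<^sup>2 = 1" "A \<ge> 0"
  shows "sqrt (integral {0..1} (\<lambda>t. (u t)\<^sup>2)) \<ge> A"
proof -
  have pt: "2 * A * (u t * w t) - A\<^sup>2 \<le> (u t)\<^sup>2" for t
  proof -
    have "0 \<le> (u t - A * w t)\<^sup>2" by simp
    also have "\<dots> = (u t)\<^sup>2 - 2 * A * (u t * w t) + A\<^sup>2 * (w t)\<^sup>2"
      by (simp add: power2_eq_square algebra_simps)
    finally show ?thesis using assms(3)[of t] by simp
  qed
  have hi: "((\<lambda>t. 2 * A * (u t * w t) - A\<^sup>2) has_integral (2 * A * A - A\<^sup>2)) {0..1}"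
    using has_integral_diff[OF has_integral_mult_right[OF assms(2), of "2*A"] has_integral_const_real[of "A\<^sup>2" 0 1]]
    by simp
  have "2 * A * A - A\<^sup>2 \<le> integral {0..1} (\<lambda>t. (u t)\<^sup>2)"
    using integral_le[OF has_integral_integrable[OF hi] assms(1) pt] integral_unique[OF hi] by simp
  then have "A\<^sup>2 \<le> integral {0..1} (\<lambda>t. (u t)\<^sup>2)" by (simp add: power2_eq_square)
  then have "sqrt (A\<^sup>2) \<le> sqrt (integral {0..1} (\<lambda>t. (u t)\<^sup>2))" by (rule real_sqrt_le_mono)
  then show ?thesis using assms(4) by simp
qed

lemma wq_sq: "(wq t)\<^sup>2 = 1" by (simp add: wq_def)

lemma part2:
  fixes gh :: "real \<Rightarrow> real"
  assumes "gh = (\<lambda>t. \<Sum>l\<le>Np. a l * pwm (1/2) l t)"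
  shows "L2norm01 (\<lambda>t. g_test t - gh t) \<ge> 1/2"
proof -
  have cg: "continuous_on {0..1} gh" unfolding assms by (rule span_cont)
  have cg2: "\<And>c. continuous_on {0..1} (\<lambda>t. (c - gh t)\<^sup>2)" by (intro continuous_intros cg)
  have cg3: "continuous_on {0..1} (\<lambda>t. (gh t)\<^sup>2)" by (intro continuous_intros cg)
  have i1: "((\<lambda>t. (g_test t - gh t)\<^sup>2) has_integral (integral {0..1/4} (\<lambda>t. (1 - gh t)\<^sup>2)
     + integral {1/4..1/2} (\<lambda>t. (0 - gh t)\<^sup>2) + integral {1/2..3/4} (\<lambda>t. (0 - gh t)\<^sup>2)
     + integral {3/4..1} (\<lambda>t. (-1 - gh t)\<^sup>2))) {0..1}"
    by (rule pw_has_integral) (auto simp: g_test_def intro: cg2 cg3)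
  have gw: "((\<lambda>t. g_test t * wq t) has_integral (integral {0..1/4} (\<lambda>t::real. 1::real)
     + integral {1/4..1/2} (\<lambda>t::real. 0::real) + integral {1/2..3/4} (\<lambda>t::real. 0::real)
     + integral {3/4..1} (\<lambda>t::real. 1::real))) {0..1}"
    by (rule pw_has_integral) (auto simp: g_test_def wq_def)
  then have gw': "((\<lambda>t. g_test t * wq t) has_integral 1/2) {0..1}" by simp
  have hw: "((\<lambda>t. gh t * wq t) has_integral 0) {0..1}" unfolding assms by (rule span_pw)
  have uw: "((\<lambda>t. (g_test t - gh t) * wq t) has_integral (1/2)) {0..1}"
    using has_integral_diff[OF gw' hw] by (simp add: algebra_simps)
  show ?thesis unfolding L2norm01_def
    by (rule CS[OF has_integral_integrable[OF i1] uw wq_sq]) simp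
qed

lemma part3:
  "\<not> (\<forall>f::real \<Rightarrow> real. f integrable_on {0..1} \<and> (\<lambda>t. (f t)\<^sup>2) integrable_on {0..1}
              \<longrightarrow> (\<forall>\<epsilon>>0. \<exists>(N::nat) (a::nat \<Rightarrow> real).
                     L2norm01 (\<lambda>t. f t - (\<Sum>l\<le>N. a l * pwm (1/2) l t)) < \<epsilon>))"
proof
  assume H: "\<forall>f::real \<Rightarrow> real. f integrable_on {0..1} \<and> (\<lambda>t. (f t)\<^sup>2) integrable_on {0..1}
              \<longrightarrow> (\<forall>\<epsilon>>0. \<exists>(N::nat) (a::nat \<Rightarrow> real).
                     L2norm01 (\<lambda>t. f t - (\<Sum>l\<le>N. a l * pwm (1/2) l t)) < \<epsilon>)"
  have wi: "(wq has_integral (integral {0..1/4} (\<lambda>t::real. 1::real)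
     + integral {1/4..1/2} (\<lambda>t::real. -1::real) + integral {1/2..3/4} (\<lambda>t::real. 1::real)
     + integral {3/4..1} (\<lambda>t::real. -1::real))) {0..1}"
    by (rule pw_has_integral) (auto simp: wq_def)
  have w2: "(\<lambda>t. (wq t)\<^sup>2) integrable_on {0..1}"
    using has_integral_integrable[OF has_integral_const_real[of "1::real" 0 1]] by (simp add: wq_sq)
  have "wq integrable_on {0..1} \<and> (\<lambda>t. (wq t)\<^sup>2) integrable_on {0..1}"
    using has_integral_integrable[OF wi] w2 by blast
  then have "\<forall>\<epsilon>>0. \<exists>(N::nat) (a::nat \<Rightarrow> real).
                     L2norm01 (\<lambda>t. wq t - (\<Sum>l\<le>N. a l * pwm (1/2) l t)) < \<epsilon>"
    using spec[OF H, of wq] by (rule mp[rotated])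
  then have "\<exists>(N::nat) (a::nat \<Rightarrow> real). L2norm01 (\<lambda>t. wq t - (\<Sum>l\<le>N. a l * pwm (1/2) l t)) < 1"
    by simp
  then obtain N a where lt: "L2norm01 (\<lambda>t. wq t - (\<Sum>l\<le>N. a l * pwm (1/2) l t)) < 1"
    by blast
  define s where "s = (\<lambda>t. \<Sum>l\<le>N. a l * pwm (1/2) l t)"
  have cs: "continuous_on {0..1} s" unfolding s_def by (rule span_cont)
  have cs2: "\<And>c. continuous_on {0..1} (\<lambda>t. (c - s t)\<^sup>2)" by (intro continuous_intros cs)
  have i1: "((\<lambda>t. (wq t - s t)\<^sup>2) has_integral (integral {0..1/4} (\<lambda>t. (1 - s t)\<^sup>2)
     + integral {1/4..1/2} (\<lambda>t. (-1 - s t)\<^sup>2) + integral {1/2..3/4} (\<lambda>t. (1 - s t)\<^sup>2)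
     + integral {3/4..1} (\<lambda>t. (-1 - s t)\<^sup>2))) {0..1}"
    by (rule pw_has_integral) (auto simp: wq_def intro: cs2)
  have ww: "((\<lambda>t. wq t * wq t) has_integral 1) {0..1}"
    using has_integral_const_real[of 1 0 1] by (simp add: wq_sq[unfolded power2_eq_square])
  have hw: "((\<lambda>t. s t * wq t) has_integral 0) {0..1}" unfolding s_def by (rule span_pw)
  have uw: "((\<lambda>t. (wq t - s t) * wq t) has_integral 1) {0..1}"
    using has_integral_diff[OF ww hw] by (simp add: algebra_simps)
  have "L2norm01 (\<lambda>t. wq t - s t) \<ge> 1"
    unfolding L2norm01_def
    by (rule CS[OF has_integral_integrable[OF i1] uw wq_sq]) simp
  then show False using lt unfolding s_def by simp
qed

theorem mainTheorem5:
  shows "(\<forall>k. (k = 0 \<or> odd k) \<longrightarrow>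
            integral {0..1} (\<lambda>t. pwm (1/2) k t * g_test t) = 0)
       \<and> (\<exists>c>0. \<forall>(Np::nat) (gh::real \<Rightarrow> real).
            ((\<exists>a::nat \<Rightarrow> real. gh = (\<lambda>t. \<Sum>l\<le>Np. a l * pwm (1/2) l t))
             \<and> (\<forall>l\<le>Np. ip01 (\<lambda>t. g_test t - gh t) (pwm (1/2) l) = 0))
            \<longrightarrow> L2norm01 (\<lambda>t. g_test t - gh t) \<ge> c)
       \<and> \<not> (\<forall>f::real \<Rightarrow> real. f integrable_on {0..1} \<and> (\<lambda>t. (f t)\<^sup>2) integrable_on {0..1}
              \<longrightarrow> (\<forall>\<epsilon>>0. \<exists>(N::nat) (a::nat \<Rightarrow> real).
                     L2norm01 (\<lambda>t. f t - (\<Sum>l\<le>N. a l * pwm (1/2) l t)) < \<epsilon>))"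
proof (intro conjI)
  show "\<forall>k. (k = 0 \<or> odd k) \<longrightarrow> integral {0..1} (\<lambda>t. pwm (1/2) k t * g_test t) = 0"
    using int_pg by blast
  show "\<exists>c>0. \<forall>(Np::nat) (gh::real \<Rightarrow> real).
            ((\<exists>a::nat \<Rightarrow> real. gh = (\<lambda>t. \<Sum>l\<le>Np. a l * pwm (1/2) l t))
             \<and> (\<forall>l\<le>Np. ip01 (\<lambda>t. g_test t - gh t) (pwm (1/2) l) = 0))
            \<longrightarrow> L2norm01 (\<lambda>t. g_test t - gh t) \<ge> c"
  proof (rule exI[of _ "1/2"], intro conjI allI impI)
    fix Np :: nat and gh :: "real \<Rightarrow> real"
    assume "(\<exists>a::nat \<Rightarrow> real. gh = (\<lambda>t. \<Sum>l\<le>Np. a l * pwm (1/2) l t))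
             \<and> (\<forall>l\<le>Np. ip01 (\<lambda>t. g_test t - gh t) (pwm (1/2) l) = 0)"
    then obtain a where "gh = (\<lambda>t. \<Sum>l\<le>Np. a l * pwm (1/2) l t)" by blast
    then show "L2norm01 (\<lambda>t. g_test t - gh t) \<ge> 1/2" by (rule part2)
  qed simp
  show "\<not> (\<forall>f::real \<Rightarrow> real. f integrable_on {0..1} \<and> (\<lambda>t. (f t)\<^sup>2) integrable_on {0..1}
              \<longrightarrow> (\<forall>\<epsilon>>0. \<exists>(N::nat) (a::nat \<Rightarrow> real).
                     L2norm01 (\<lambda>t. f t - (\<Sum>l\<le>N. a l * pwm (1/2) l t)) < \<epsilon>))"
    by (rule part3)
qed

end
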